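(* Let $A\in\mathbb{R}^{m\times n}$, $b\in\mathbb{R}^m$, $f(x)=\frac12\|Ax-b\|^2$, and let $x^k,x^{k-1}\in\mathbb{R}^n$ with $\nabla f(x^k)\neq 0$ and $x^k\neq x^{k-1}$. Let $g=\nabla f(x^k)/\|\nabla f(x^k)\|$, $d=(x^k-x^{k-1})/\|x^k-x^{k-1}\|$, $\epsilon=g^td$, and assume $\epsilon^2<1$. Let $S_{11}=g^tA^tAg$, $S_{12}=g^tA^tAd$, $S_{22}=d^tA^tAd$, $\eta_1=1-\epsilon^2$, $\eta_2=-S_{11}-S_{22}+2\epsilon S_{12}$, $\eta_3=S_{11}S_{22}-S_{12}^2$, $$\sigma=\frac{-\eta_2+\sqrt{\eta_2^2-4\eta_1\eta_3}}{2\eta_1},$$ let $(\tau,\rho)$ be the solution of $$\begin{pmatrix}1&\epsilon\\ \epsilon&1\end{pmatrix}\begin{pmatrix}\tau\\ \rho\end{pmatrix}=\begin{pmatrix}\sqrt{\sigma-S_{11}}\\ \sqrt{\sigma-S_{22}}\,\mathrm{sgn}(\epsilon\sigma-S_{12})\end{pmatrix},$$ and $u=\tau g+\rho d$. Then $H=\sigma\mathbf I-uu^t\succeq 0$.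
   Context: $\|\cdot\|$ denotes the Euclidean norm; $\mathrm{sgn}$ is the sign function; $\mathbf I$ is the identity; $\succeq 0$ means positive semidefinite. Under these assumptions $\eta_2^2-4\eta_1\eta_3\ge 0$ and $\sigma\ge S_{11},S_{22}$, so all quantities are real. *)

theory Defs
  imports "HOL-Analysis.Analysis"
begin

definition lsq :: "real^'n^'m \<Rightarrow> real^'m \<Rightarrow> real^'n \<Rightarrow> real" where
  "lsq A b x = (1/2) * (norm (A *v x - b))^2"

definition lsq_grad :: "real^'n^'m \<Rightarrow> real^'m \<Rightarrow> real^'n \<Rightarrow> real^'n" where
  "lsq_grad A b x = transpose A *v (A *v x - b)"

definition psd :: "real^'n^'n \<Rightarrow> bool" where
  "psd H \<longleftrightarrow> (\<forall>v. v \<bullet> (H *v v) \<ge> 0)"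

definition outer :: "real^'n \<Rightarrow> real^'n \<Rightarrow> real^'n^'n" where
  "outer u w = (\<chi> i j. u $ i * w $ j)"

end

theory Submission
  imports Defs
begin

lemma ATA_inner: "x \<bullet> ((transpose A ** A) *v y) = (A *v x) \<bullet> (A *v (y::real^'n))"
proof -
  have "x \<bullet> ((transpose A ** A) *v y) = x \<bullet> (transpose A *v (A *v y))"
    by (simp only: matrix_vector_mul_assoc)
  also have "\<dots> = (x v* transpose A) \<bullet> (A *v y)" by (simp only: dot_lmul_matrix)
  also have "\<dots> = (A *v x) \<bullet> (A *v y)" by (simp only: vector_transpose_matrix)
  finally show ?thesis .
qed

lemma outer_mult: "outer u u *v v = (u \<bullet> v) *\<^sub>R (u::real^'n)"
  by (simp add: vec_eq_iff outer_def matrix_vector_mult_def inner_vec_def sum_distrib_left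
      algebra_simps)

lemma H_form: "(v::real^'n) \<bullet> ((s *\<^sub>R mat 1 - outer u u) *v v) = s * (v \<bullet> v) - (u \<bullet> v)^2"
proof -
  have "(s *\<^sub>R mat 1 - outer u u) *v v = s *\<^sub>R v - (u \<bullet> v) *\<^sub>R (u::real^'n)"
    by (simp add: matrix_vector_mult_diff_rdistrib outer_mult scaleR_matrix_vector_assoc[symmetric])
  then show ?thesis by (simp add: inner_diff_right power2_eq_square inner_commute)
qed

lemma sigma_facts:
  fixes e S11 S12 S22 \<sigma> :: real
  assumes he: "e^2 < 1"
    and hsig: "\<sigma> = (- (- S11 - S22 + 2 * e * S12) + sqrt ((- S11 - S22 + 2 * e * S12)^2
         - 4 * (1 - e^2) * (S11 * S22 - S12^2))) / (2 * (1 - e^2))"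
  shows "\<sigma> \<ge> S11" "\<sigma> \<ge> S22" "(\<sigma> - S11) * (\<sigma> - S22) = (e * \<sigma> - S12)^2"
proof -
  define n1 where "n1 = 1 - e^2"
  define n2 where "n2 = - S11 - S22 + 2 * e * S12"
  define n3 where "n3 = S11 * S22 - S12^2"
  define D where "D = n2^2 - 4 * n1 * n3"
  have n1p: "n1 > 0" using he by (simp add: n1_def)
  have key: "\<And>s. 4 * n1 * ((s - S11) * (s - S22) - (e * s - S12)^2) = (2 * n1 * s + n2)^2 - D"
    by (simp add: n1_def n2_def n3_def D_def power2_eq_square algebra_simps)
  have sg: "\<sigma> = (- n2 + sqrt D) / (2 * n1)" using hsig by (simp add: n1_def n2_def n3_def D_def)
  have s2: "2 * n1 * \<sigma> = - n2 + sqrt D" using sg n1p by (simp add: field_simps)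
  have bound: "\<sigma> \<ge> S \<and> D \<ge> 0" if "(S - S11) * (S - S22) - (e * S - S12)^2 \<le> 0" for S
  proof -
    have "4 * n1 * ((S - S11) * (S - S22) - (e * S - S12)^2) \<le> 0"
      using that n1p by (simp add: mult_nonneg_nonpos)
    hence le: "(2 * n1 * S + n2)^2 \<le> D" using key[of S] by linarith
    have D0: "D \<ge> 0" using le zero_le_power2[of "2 * n1 * S + n2"] by linarith
    have "sqrt ((2 * n1 * S + n2)^2) \<le> sqrt D" using le by (rule real_sqrt_le_mono)
    hence "\<bar>2 * n1 * S + n2\<bar> \<le> sqrt D" by (simp only: real_sqrt_abs)
    hence "2 * n1 * S \<le> 2 * n1 * \<sigma>" using s2 by linarith
    thus ?thesis using n1p D0 by simp
  qed
  show "\<sigma> \<ge> S11" using bound[of S11] by simp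
  show "\<sigma> \<ge> S22" using bound[of S22] by simp
  have "D \<ge> 0" using bound[of S11] by simp
  hence "(2 * n1 * \<sigma> + n2)^2 - D = 0" using s2 by simp
  hence "4 * n1 * ((\<sigma> - S11) * (\<sigma> - S22) - (e * \<sigma> - S12)^2) = 0" using key by simp
  thus "(\<sigma> - S11) * (\<sigma> - S22) = (e * \<sigma> - S12)^2" using n1p by simp
qed
theorem claim3:
  fixes A :: "real^'n^'m" and b :: "real^'m" and xk xk1 :: "real^'n"
    and g d :: "real^'n" and \<epsilon> S11 S12 S22 \<eta>1 \<eta>2 \<eta>3 \<sigma> \<tau> \<rho> :: real and u :: "real^'n"
  assumes hgrad: "lsq_grad A b xk \<noteq> 0"
    and hdiff: "xk \<noteq> xk1"
    and hg: "g = lsq_grad A b xk /\<^sub>R norm (lsq_grad A b xk)"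
    and hd: "d = (xk - xk1) /\<^sub>R norm (xk - xk1)"
    and heps: "\<epsilon> = g \<bullet> d"
    and heps1: "\<epsilon>^2 < 1"
    and hS11: "S11 = g \<bullet> ((transpose A ** A) *v g)"
    and hS12: "S12 = g \<bullet> ((transpose A ** A) *v d)"
    and hS22: "S22 = d \<bullet> ((transpose A ** A) *v d)"
    and h1: "\<eta>1 = 1 - \<epsilon>^2"
    and h2: "\<eta>2 = - S11 - S22 + 2 * \<epsilon> * S12"
    and h3: "\<eta>3 = S11 * S22 - S12^2"
    and hsig: "\<sigma> = (- \<eta>2 + sqrt (\<eta>2^2 - 4 * \<eta>1 * \<eta>3)) / (2 * \<eta>1)"
    and hsys1: "\<tau> + \<epsilon> * \<rho> = sqrt (\<sigma> - S11)"
    and hsys2: "\<epsilon> * \<tau> + \<rho> = sqrt (\<sigma> - S22) * sgn (\<epsilon> * \<sigma> - S12)"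
    and hu: "u = \<tau> *\<^sub>R g + \<rho> *\<^sub>R d"
  shows "psd (\<sigma> *\<^sub>R mat 1 - outer u u)"
proof -
  have ng: "norm g = 1" using hgrad hg by simp
  have nd: "norm d = 1" using hdiff hd by simp
  have gg: "g \<bullet> g = 1" using ng by (metis power2_norm_eq_inner power_one)
  have dd: "d \<bullet> d = 1" using nd by (metis power2_norm_eq_inner power_one)
  have dg: "d \<bullet> g = \<epsilon>" using heps by (simp add: inner_commute)
  define Ag where "Ag = A *v g"
  define Ad where "Ad = A *v d"
  have S11e: "S11 = Ag \<bullet> Ag" using hS11 ATA_inner Ag_def by metis
  have S12e: "S12 = Ag \<bullet> Ad" using hS12 ATA_inner Ag_def Ad_def by metis
  have S22e: "S22 = Ad \<bullet> Ad" using hS22 ATA_inner Ad_def by metis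
  have S11p: "S11 \<ge> 0" using S11e by simp
  have sf: "\<sigma> \<ge> S11" "\<sigma> \<ge> S22" "(\<sigma> - S11) * (\<sigma> - S22) = (\<epsilon> * \<sigma> - S12)^2"
    using sigma_facts[OF heps1, of \<sigma> S11 S22 S12] hsig h1 h2 h3 by simp_all
  have sig0: "\<sigma> \<ge> 0" using sf S11p by linarith
  define ug where "ug = \<tau> + \<epsilon> * \<rho>"
  define ud where "ud = \<epsilon> * \<tau> + \<rho>"
  define E where "E = \<epsilon> * \<sigma> - S12"
  have ugsq: "ug^2 = \<sigma> - S11" using hsys1 sf(1) ug_def by simp
  have udsq: "ud^2 \<le> \<sigma> - S22"
  proof -
    have "ud^2 = (\<sigma> - S22) * (sgn E)^2" using hsys2 sf(2) ud_def E_def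
      by (simp add: power_mult_distrib)
    moreover have "(sgn E)^2 \<le> 1" by (cases "E = 0") (auto simp: sgn_if)
    ultimately show ?thesis using sf(2) by (metis mult_left_le mult.commute diff_ge_0_iff_ge)
  qed
  have ugud: "ug * ud = E"
  proof -
    have "ug * ud = sqrt ((\<sigma> - S11) * (\<sigma> - S22)) * sgn E"
      using hsys1 hsys2 ug_def ud_def E_def by (simp add: real_sqrt_mult)
    also have "\<dots> = \<bar>E\<bar> * sgn E" using sf(3) E_def by simp
    also have "\<dots> = E" by (simp add: abs_mult_sgn)
    finally show ?thesis .
  qed
  have ug_eq: "u \<bullet> g = ug" using hu gg dd dg ug_def by (simp add: inner_add_left algebra_simps)
  have ud_eq: "u \<bullet> d = ud" using hu gg dd heps ud_def by (simp add: inner_add_left algebra_simps)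
  have n1p: "1 - \<epsilon>^2 > 0" using heps1 by simp
  show ?thesis unfolding psd_def H_form
  proof
    fix v :: "real^'n"
    define a where "a = v \<bullet> g"
    define c where "c = v \<bullet> d"
    define \<alpha> where "\<alpha> = (a - \<epsilon> * c) / (1 - \<epsilon>^2)"
    define \<beta> where "\<beta> = (c - \<epsilon> * a) / (1 - \<epsilon>^2)"
    define p where "p = \<alpha> *\<^sub>R g + \<beta> *\<^sub>R d"
    have pg: "p \<bullet> g = a"
    proof -
      have "p \<bullet> g = \<alpha> + \<beta> * \<epsilon>" using p_def gg dg by (simp add: inner_add_left)
      also have "\<dots> = ((a - \<epsilon> * c) + (c - \<epsilon> * a) * \<epsilon>) / (1 - \<epsilon>^2)"
        unfolding \<alpha>_def \<beta>_def by (simp add: add_divide_distrib)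
      also have "\<dots> = (a * (1 - \<epsilon>^2)) / (1 - \<epsilon>^2)"
        by (simp add: power2_eq_square algebra_simps)
      also have "\<dots> = a" using n1p by simp
      finally show ?thesis .
    qed
    have pd: "p \<bullet> d = c"
    proof -
      have "p \<bullet> d = \<alpha> * \<epsilon> + \<beta>" using p_def dd heps by (simp add: inner_add_left)
      also have "\<dots> = ((a - \<epsilon> * c) * \<epsilon> + (c - \<epsilon> * a)) / (1 - \<epsilon>^2)"
        unfolding \<alpha>_def \<beta>_def by (simp add: add_divide_distrib)
      also have "\<dots> = (c * (1 - \<epsilon>^2)) / (1 - \<epsilon>^2)"
        by (simp add: power2_eq_square algebra_simps)
      also have "\<dots> = c" using n1p by simp
      finally show ?thesis .
    qed
    have pp: "p \<bullet> p = \<alpha> * a + \<beta> * c"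
    proof -
      have "p \<bullet> p = \<alpha> * (p \<bullet> g) + \<beta> * (p \<bullet> d)"
        by (subst (2) p_def) (simp add: inner_add_right)
      thus ?thesis using pg pd by simp
    qed
    have pp2: "p \<bullet> p = \<alpha>^2 + 2 * \<alpha> * \<beta> * \<epsilon> + \<beta>^2"
      using gg dd dg heps by (simp add: p_def inner_add_left inner_add_right power2_eq_square
          algebra_simps inner_commute)
    have vp: "v \<bullet> p = \<alpha> * a + \<beta> * c"
      by (simp add: p_def inner_add_right a_def c_def)
    have "0 \<le> (v - p) \<bullet> (v - p)" by simp
    also have "\<dots> = v \<bullet> v - p \<bullet> p" using pp vp
      by (simp add: inner_diff_left inner_diff_right inner_commute)
    finally have vvpp: "p \<bullet> p \<le> v \<bullet> v" by simp
    have uv: "u \<bullet> v = u \<bullet> p"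
    proof -
      have "u \<bullet> v = \<tau> * (g \<bullet> v) + \<rho> * (d \<bullet> v)" unfolding hu by (simp add: inner_add_left)
      moreover have "u \<bullet> p = \<tau> * (g \<bullet> p) + \<rho> * (d \<bullet> p)" unfolding hu by (simp add: inner_add_left)
      ultimately show ?thesis using pg pd a_def c_def by (simp add: inner_commute)
    qed
    have up: "u \<bullet> p = \<alpha> * ug + \<beta> * ud"
      using ug_eq ud_eq by (simp add: p_def inner_add_right)
    have Ap: "A *v p = \<alpha> *\<^sub>R Ag + \<beta> *\<^sub>R Ad"
      by (simp add: p_def Ag_def Ad_def matrix_vector_right_distrib matrix_vector_mult_scaleR)
    have Q: "0 \<le> \<alpha>^2 * S11 + 2 * \<alpha> * \<beta> * S12 + \<beta>^2 * S22"
    proof -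
      have "0 \<le> (A *v p) \<bullet> (A *v p)" by simp
      also have "\<dots> = \<alpha>^2 * S11 + 2 * \<alpha> * \<beta> * S12 + \<beta>^2 * S22"
        unfolding Ap S11e S12e S22e
        by (simp add: inner_add_left inner_add_right power2_eq_square algebra_simps inner_commute)
      finally show ?thesis .
    qed
    have "\<sigma> * (p \<bullet> p) - (u \<bullet> p)^2
        = \<alpha>^2 * (\<sigma> - ug^2) + 2 * \<alpha> * \<beta> * (\<epsilon> * \<sigma> - ug * ud) + \<beta>^2 * (\<sigma> - ud^2)"
      unfolding pp2 up by (simp add: power2_eq_square algebra_simps)
    also have "\<dots> = \<alpha>^2 * S11 + 2 * \<alpha> * \<beta> * S12 + \<beta>^2 * (\<sigma> - ud^2)"
      using ugsq ugud E_def by simp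
    also have "\<dots> \<ge> \<alpha>^2 * S11 + 2 * \<alpha> * \<beta> * S12 + \<beta>^2 * S22"
      using udsq by (simp add: mult_left_mono)
    finally have "\<sigma> * (p \<bullet> p) - (u \<bullet> p)^2 \<ge> 0" using Q by linarith
    moreover have "\<sigma> * (p \<bullet> p) \<le> \<sigma> * (v \<bullet> v)" using vvpp sig0 by (simp add: mult_left_mono)
    ultimately show "0 \<le> \<sigma> * (v \<bullet> v) - (u \<bullet> v)^2" unfolding uv by linarith
  qed
qed

end
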